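(* Let $q$ be a prime power, $m$ a positive integer, and let $g_{11}(x),g_{12}(x),f_{11}(x),f_{12}(x)\in\mathbb{F}_q[x]$ be such that $g_{11}(x)\mid x^m-1$ and $f_{11}(x)\mid x^m-1$. Suppose $\gcd(g_{11}(x),g_{12}(x))=1$, $\gcd(f_{11}(x),f_{12}(x))=1$ and $\gcd(f_{11}(x),g_{11}(x))=1$. Then the following are equivalent: (1) $\gcd\left(\dfrac{x^m-1}{f_{11}(x)},\dfrac{x^m-1}{g_{11}(x)},\,g_{11}(x)f_{12}(x)-g_{12}(x)f_{11}(x)\right)=1$; (2) $\gcd\big(x^m-1,\,g_{11}(x)f_{12}(x)-g_{12}(x)f_{11}(x)\big)=1$. *)

theory Defs
  imports "HOL-Computational_Algebra.Computational_Algebra"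
begin

end

theory Submission
  imports Defs
begin

lemma aux:
  fixes f g a b d :: "'a::{finite,field_gcd} poly"
  assumes "coprime f a" "coprime f g" "d dvd g * a - b * f"
  shows "coprime d f"
proof (rule coprimeI)
  fix c assume c1: "c dvd d" and c2: "c dvd f"
  have "c dvd g * a - b * f" using c1 assms(3) dvd_trans by blast
  moreover have "c dvd b * f" using c2 by simp
  ultimately have "c dvd g * a" by (metis add_diff_cancel_left' diff_add_cancel dvd_add)
  moreover have "coprime c a" using c2 assms(1) coprime_imp_coprime dvd_trans by blast
  ultimately have "c dvd g" using coprime_dvd_mult_left_iff by blast
  thus "is_unit c" using c2 assms(2) coprime_common_divisor by blast
qed

theorem lemma4p2:
  fixes g11 g12 f11 f12 :: "'a::{finite,field_gcd} poly" and m :: nat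
  assumes "m > 0"
    and "g11 dvd [:0, 1:] ^ m - 1" and "f11 dvd [:0, 1:] ^ m - 1"
    and "gcd g11 g12 = 1" and "gcd f11 f12 = 1" and "gcd f11 g11 = 1"
  shows "gcd (gcd (([:0, 1:] ^ m - 1) div f11) (([:0, 1:] ^ m - 1) div g11))
             (g11 * f12 - g12 * f11) = 1
         \<longleftrightarrow> gcd ([:0, 1:] ^ m - 1) (g11 * f12 - g12 * f11) = 1"
proof -
  define N :: "'a poly" where "N = [:0, 1:] ^ m - 1"
  define D where "D = g11 * f12 - g12 * f11"
  define d where "d = gcd N D"
  have cf: "coprime f11 f12" "coprime g11 g12" "coprime f11 g11"
    using assms(4-6) by (simp_all add: coprime_iff_gcd_eq_1)
  have dD: "d dvd D" and dN: "d dvd N" unfolding d_def by auto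
  have c1: "coprime d f11"
    using aux[of f11 f12 g11 d g12] cf dD unfolding D_def by simp
  have D': "D = f11 * (- g12) - (- f12) * g11" unfolding D_def by (simp add: algebra_simps)
  have c2: "coprime d g11"
    using aux[of g11 "- g12" f11 d "- f12"] cf dD D'
    by (simp add: coprime_commute)
  have N1: "N = f11 * (N div f11)" using assms(3) N_def by simp
  have N2: "N = g11 * (N div g11)" using assms(2) N_def by simp
  have "d dvd N div f11" using dN N1 c1
    by (metis coprime_dvd_mult_right_iff)
  moreover have "d dvd N div g11" using dN N2 c2
    by (metis coprime_dvd_mult_right_iff)
  ultimately have key: "d dvd gcd (gcd (N div f11) (N div g11)) D" using dD by simp
  have bk: "gcd (gcd (N div f11) (N div g11)) D dvd d"
  proof -
    have "gcd (gcd (N div f11) (N div g11)) D dvd N div f11"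
      by (meson dvd_trans gcd_dvd1)
    also have "N div f11 dvd N" using N1 by (metis dvd_triv_right)
    finally have "gcd (gcd (N div f11) (N div g11)) D dvd N" .
    thus ?thesis unfolding d_def by simp
  qed
  have eq: "gcd (gcd (N div f11) (N div g11)) D = d"
  proof (rule associated_eqI)
    show "normalize (gcd (gcd (N div f11) (N div g11)) D) = gcd (gcd (N div f11) (N div g11)) D"
      by (rule normalize_gcd)
    show "normalize d = d" unfolding d_def by (rule normalize_gcd)
  qed (use key bk in auto)
  show ?thesis using eq unfolding N_def D_def d_def by (simp only:)
qed

end
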